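(* Let $D\subset\mathbb{R}^d$ be a finite set, let $\epsilon>0$, and let $\tilde{\kappa}(x,y)=\exp(-\|x-y\|^2/\epsilon^2)$. Let $K\ge 2$ be an integer with $K\le |D|$. Let $S_{opt}\subseteq D$ with $|S_{opt}|=K$ minimize $\sum_{s_i,s_j\in S,\ i<j}\tilde{\kappa}(s_i,s_j)$ over all $K$-subsets $S\subseteq D$. Let $S_{int}\subseteq D$ with $|S_{int}|=K$ be a sample produced by the Interchange algorithm run until no replacement decreases the objective. This means: for every $s\in S_{int}$ and every $t\in D\setminus S_{int}$, the objective of $(S_{int}\setminus\{s\})\cup\{t\}$ is not smaller than that of $S_{int}$. Then $$\frac{1}{K(K-1)}\sum_{s_i,s_j\in S_{int},\ i<j}\tilde{\kappa}(s_i,s_j)\ \le\ \frac14+\frac{1}{K(K-1)}\sum_{s_i,s_j\in S_{opt},\ i<j}\tilde{\kappa}(s_i,s_j).$$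
   Context: The Interchange algorithm starts from a $K$-subset of $D$. It repeatedly replaces one element of the current subset by an element of $D$ outside it whenever this strictly decreases the objective $\sum_{s_i,s_j\in S,\ i<j}\tilde{\kappa}(s_i,s_j)$. *)

theory Defs
  imports "HOL-Analysis.Analysis"
begin

definition gkernel :: "real \<Rightarrow> real^'n \<Rightarrow> real^'n \<Rightarrow> real" where
  "gkernel eps x y = exp (- (norm (x - y))\<^sup>2 / eps\<^sup>2)"

text \<open>Sum of the (symmetric) kernel over unordered pairs {s_i, s_j}, i < j, of distinct
  elements of S, written as half of the sum over ordered pairs of distinct elements.\<close>
definition pair_obj :: "real \<Rightarrow> (real^'n) set \<Rightarrow> real" where
  "pair_obj eps S = (\<Sum>x \<in> S. \<Sum>y \<in> S - {x}. gkernel eps x y) / 2"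

end

theory Submission imports Defs begin

definition psd :: "'a set \<Rightarrow> ('a \<Rightarrow> 'a \<Rightarrow> real) \<Rightarrow> bool" where
  "psd P G \<longleftrightarrow> (\<forall>c. (\<Sum>x\<in>P. \<Sum>y\<in>P. c x * c y * G x y) \<ge> 0)"

lemma psd_one: "psd P (\<lambda>x y. 1)"
  unfolding psd_def
proof
  fix c :: "'a \<Rightarrow> real"
  have "(\<Sum>x\<in>P. \<Sum>y\<in>P. c x * c y * 1) = (\<Sum>x\<in>P. c x) * (\<Sum>y\<in>P. c y)"
    by (simp add: sum_product)
  also have "\<dots> \<ge> 0" by simp
  finally show "(\<Sum>x\<in>P. \<Sum>y\<in>P. c x * c y * 1) \<ge> 0" .
qed

lemma psd_mult_inner:
  fixes G :: "real^'n \<Rightarrow> real^'n \<Rightarrow> real"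
  assumes "psd P G"
  shows "psd P (\<lambda>x y. (x \<bullet> y) * G x y)"
  unfolding psd_def
proof
  fix c :: "real^'n \<Rightarrow> real"
  have "(\<Sum>x\<in>P. \<Sum>y\<in>P. c x * c y * ((x \<bullet> y) * G x y))
     = (\<Sum>x\<in>P. \<Sum>y\<in>P. \<Sum>i\<in>UNIV. (c x * x$i) * (c y * y$i) * G x y)"
    by (simp add: inner_vec_def sum_distrib_left sum_distrib_right algebra_simps)
  also have "\<dots> = (\<Sum>i\<in>UNIV. \<Sum>x\<in>P. \<Sum>y\<in>P. (c x * x$i) * (c y * y$i) * G x y)"
  proof -
    have "\<And>x. (\<Sum>y\<in>P. \<Sum>i\<in>UNIV. (c x * x$i) * (c y * y$i) * G x y) = (\<Sum>i\<in>UNIV. \<Sum>y\<in>P. (c x * x$i) * (c y * y$i) * G x y)"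
      by (rule sum.swap)
    then show ?thesis by (simp add: sum.swap[of _ P UNIV])
  qed
  also have "\<dots> \<ge> 0"
  proof (rule sum_nonneg)
    fix i assume "i \<in> (UNIV::'n set)"
    show "0 \<le> (\<Sum>x\<in>P. \<Sum>y\<in>P. (c x * x$i) * (c y * y$i) * G x y)"
      using assms unfolding psd_def by (rule allE[where x="\<lambda>x. c x * x$i"]) simp
  qed
  finally show "(\<Sum>x\<in>P. \<Sum>y\<in>P. c x * c y * ((x \<bullet> y) * G x y)) \<ge> 0" .
qed

lemma psd_pow:
  fixes P :: "(real^'n) set"
  shows "psd P (\<lambda>x y. (x \<bullet> y) ^ k)"
proof (induction k)
  case 0 then show ?case using psd_one by simp
next
  case (Suc k)
  from psd_mult_inner[OF Suc] show ?case by simp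
qed

lemma psd_exp:
  fixes P :: "(real^'n) set" and s :: real
  assumes "finite P" "s \<ge> 0"
  shows "(\<Sum>x\<in>P. \<Sum>y\<in>P. c x * c y * exp (s * (x \<bullet> y))) \<ge> 0"
proof -
  have ser: "(\<lambda>n. t ^ n / fact n) sums exp t" for t::real
    using exp_converges[of t] by (simp add: divide_inverse mult.commute)
  have "(\<lambda>n. \<Sum>x\<in>P. \<Sum>y\<in>P. c x * c y * ((s * (x \<bullet> y)) ^ n / fact n))
          sums (\<Sum>x\<in>P. \<Sum>y\<in>P. c x * c y * exp (s * (x \<bullet> y)))" (is "?f sums ?S")
    by (intro sums_sum sums_mult ser)
  moreover have z: "(\<lambda>n. 0::real) sums 0" by simp
  moreover have nn: "0 \<le> (\<Sum>x\<in>P. \<Sum>y\<in>P. c x * c y * ((s * (x \<bullet> y)) ^ n / fact n))" for n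
  proof -
    have "(\<Sum>x\<in>P. \<Sum>y\<in>P. c x * c y * ((s * (x \<bullet> y)) ^ n / fact n))
        = (s ^ n / fact n) * (\<Sum>x\<in>P. \<Sum>y\<in>P. c x * c y * (x \<bullet> y) ^ n)"
      by (simp add: sum_distrib_left power_mult_distrib algebra_simps)
    also have "\<dots> \<ge> 0"
      using psd_pow[of P n] assms unfolding psd_def by (intro mult_nonneg_nonneg) auto
    finally show ?thesis .
  qed
  ultimately show ?thesis using sums_le[of "\<lambda>n. 0" ?f 0 ?S] by blast
qed


lemma gk_split:
  assumes "eps > 0"
  shows "gkernel eps x y = exp (-(x \<bullet> x)/eps\<^sup>2) * exp (-(y \<bullet> y)/eps\<^sup>2) * exp ((2/eps\<^sup>2) * (x \<bullet> y))"
proof -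
  have e: "-(norm (x - y))\<^sup>2 / eps\<^sup>2 = -(x \<bullet> x)/eps\<^sup>2 + -(y \<bullet> y)/eps\<^sup>2 + (2/eps\<^sup>2) * (x \<bullet> y)"
    using assms by (simp add: power2_norm_eq_inner inner_diff_left inner_diff_right inner_commute field_simps)
  show ?thesis unfolding gkernel_def by (simp only: e exp_add)
qed

lemma gk_psd:
  fixes P :: "(real^'n) set"
  assumes "finite P" "eps > 0"
  shows "(\<Sum>x\<in>P. \<Sum>y\<in>P. c x * c y * gkernel eps x y) \<ge> 0"
proof -
  define d where "d x = c x * exp (-(x \<bullet> x)/eps\<^sup>2)" for x :: "real^'n"
  have "(\<Sum>x\<in>P. \<Sum>y\<in>P. c x * c y * gkernel eps x y)
      = (\<Sum>x\<in>P. \<Sum>y\<in>P. d x * d y * exp ((2/eps\<^sup>2) * (x \<bullet> y)))"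
    by (intro sum.cong refl) (simp add: gk_split[OF assms(2)] d_def mult_ac)
  also have "\<dots> \<ge> 0" using psd_exp[OF assms(1), of "2/eps\<^sup>2" d] by simp
  finally show ?thesis .
qed

lemma gk_self: "gkernel eps x x = 1" by (simp add: gkernel_def)
lemma gk_sym: "gkernel eps x y = gkernel eps y x" by (simp add: gkernel_def norm_minus_commute)
lemma gk_pos: "gkernel eps x y > 0" by (simp add: gkernel_def)
lemma gk_le1: "gkernel eps x y \<le> 1"
  unfolding gkernel_def by (simp add: divide_nonneg_nonneg)

lemma A: "(u+v)^2 \<le> 2*u^2 + 2*(v::real)^2"
  using zero_le_square[of "u-v"] by (simp add: power2_eq_square algebra_simps)

lemma gk_tri:
  "gkernel eps a c \<ge> (gkernel eps a b)\<^sup>2 * (gkernel eps b c)\<^sup>2"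
proof -
  have t: "norm (a - c) \<le> norm (a - b) + norm (b - c)" using norm_triangle_ineq[of "a-b" "b-c"] by simp
  have "(norm (a - c))\<^sup>2 \<le> (norm (a - b) + norm (b - c))\<^sup>2"
    using t by (simp add: power_mono)
  also have "\<dots> \<le> 2*(norm (a - b))\<^sup>2 + 2*(norm (b - c))\<^sup>2"
    by (rule A)
  finally have h: "(norm (a - c))\<^sup>2 \<le> 2*(norm (a - b))\<^sup>2 + 2*(norm (b - c))\<^sup>2" .
  define p where "p = (norm (a - b))\<^sup>2"
  define q where "q = (norm (b - c))\<^sup>2"
  define r where "r = (norm (a - c))\<^sup>2"
  have h': "r / eps\<^sup>2 \<le> (2*p + 2*q) / eps\<^sup>2"
    using h unfolding p_def q_def r_def by (intro divide_right_mono) auto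
  have e2: "(exp x)\<^sup>2 = exp (2 * x)" for x :: real
    using exp_of_nat_mult[of 2 x] by simp
  have "(gkernel eps a b)\<^sup>2 * (gkernel eps b c)\<^sup>2 = exp (2 * (- p / eps\<^sup>2) + 2 * (- q / eps\<^sup>2))"
    unfolding gkernel_def p_def q_def e2 exp_add by simp
  also have "\<dots> \<le> exp (- r / eps\<^sup>2)"
    using h' by (simp add: add_divide_distrib)
  also have "\<dots> = gkernel eps a c" unfolding gkernel_def r_def by simp
  finally show ?thesis .
qed

definition WW :: "real \<Rightarrow> (real^'n) set \<Rightarrow> (real^'n) set \<Rightarrow> real" where
  "WW eps U V = (\<Sum>x\<in>U. \<Sum>y\<in>V. gkernel eps x y)"

lemma pair_obj_WW: "finite S \<Longrightarrow> pair_obj eps S = (WW eps S S - card S) / 2"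
  unfolding pair_obj_def WW_def
  by (simp add: sum_diff1 gk_self sum_subtractf)

lemma WW_sym: "WW eps U V = WW eps V U"
  unfolding WW_def by (subst sum.swap) (simp add: gk_sym)

lemma WW_un1: "finite U \<Longrightarrow> finite U' \<Longrightarrow> U \<inter> U' = {} \<Longrightarrow> WW eps (U \<union> U') V = WW eps U V + WW eps U' V"
  unfolding WW_def by (rule sum.union_disjoint)

lemma WW_un2: "finite V \<Longrightarrow> finite V' \<Longrightarrow> V \<inter> V' = {} \<Longrightarrow> WW eps U (V \<union> V') = WW eps U V + WW eps U V'"
  unfolding WW_def by (simp add: sum.union_disjoint sum.distrib)

lemma WW_ge_card: "finite U \<Longrightarrow> WW eps U U \<ge> card U"
proof -
  assume f: "finite U"
  have "(\<Sum>x\<in>U. (1::real)) \<le> (\<Sum>x\<in>U. \<Sum>y\<in>U. gkernel eps x y)"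
  proof (rule sum_mono)
    fix x assume "x \<in> U"
    then show "1 \<le> (\<Sum>y\<in>U. gkernel eps x y)"
      using member_le_sum[of x U "gkernel eps x"] f gk_pos[of eps x] gk_self[of eps x]
      by (simp add: less_imp_le)
  qed
  then show ?thesis unfolding WW_def by simp
qed

lemma WW_insert:
  assumes "finite R" "t \<notin> R"
  shows "WW eps (insert t R) (insert t R) = WW eps R R + 2 * (\<Sum>y\<in>R. gkernel eps t y) + 1"
  using assms unfolding WW_def
  by (simp add: sum.distrib gk_self gk_sym[of eps _ t])

lemma local_ineq:
  assumes "finite S" "s \<in> S" "t \<notin> S"
    and "pair_obj eps S \<le> pair_obj eps ((S - {s}) \<union> {t})"
  shows "(\<Sum>y\<in>S. gkernel eps s y) - 1 \<le> (\<Sum>y\<in>S. gkernel eps t y) - gkernel eps t s"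
proof -
  define R where "R = S - {s}"
  have fR: "finite R" and sR: "s \<notin> R" and tR: "t \<notin> R" using assms by (auto simp: R_def)
  have S: "S = insert s R" using assms by (auto simp: R_def)
  have S': "(S - {s}) \<union> {t} = insert t R" by (auto simp: R_def)
  have c: "card (insert t R) = card (insert s R)" using fR sR tR by simp
  have "WW eps (insert s R) (insert s R) \<le> WW eps (insert t R) (insert t R)"
    using assms(4) unfolding S' using pair_obj_WW[of "insert s R" eps] pair_obj_WW[of "insert t R" eps] fR c
    by (simp add: S)
  then have "(\<Sum>y\<in>R. gkernel eps s y) \<le> (\<Sum>y\<in>R. gkernel eps t y)"
    using WW_insert[OF fR sR] WW_insert[OF fR tR] by simp
  moreover have "(\<Sum>y\<in>R. gkernel eps s y) = (\<Sum>y\<in>S. gkernel eps s y) - 1"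
    using assms unfolding R_def by (simp add: sum_diff1 gk_self)
  moreover have "(\<Sum>y\<in>R. gkernel eps t y) = (\<Sum>y\<in>S. gkernel eps t y) - gkernel eps t s"
    using assms unfolding R_def by (simp add: sum_diff1)
  ultimately show ?thesis by simp
qed


lemma pair2: "x \<noteq> y \<Longrightarrow> pair_obj eps {x, y} = gkernel eps x y"
  by (simp add: pair_obj_WW WW_def gk_self gk_sym[of eps y x])

lemma quart: "(P::real) - P^4 \<le> 1/2"
proof -
  have "0 \<le> (P^2 - 1/2)^2 + (P - 1/2)^2" by simp
  then show ?thesis by (simp add: power2_eq_square algebra_simps power4_eq_xxxx)
qed

theorem theorem3:
  fixes D S_opt S_int :: "(real^'n) set" and eps :: real and K :: nat
  assumes "finite D" and "eps > 0" and "K \<ge> 2" and "K \<le> card D"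
    and "S_opt \<subseteq> D" and "card S_opt = K"
    and "\<forall>S. S \<subseteq> D \<and> card S = K \<longrightarrow> pair_obj eps S_opt \<le> pair_obj eps S"
    and "S_int \<subseteq> D" and "card S_int = K"
    and "\<forall>s \<in> S_int. \<forall>t \<in> D - S_int.
           pair_obj eps S_int \<le> pair_obj eps ((S_int - {s}) \<union> {t})"
  shows "pair_obj eps S_int / (real K * (real K - 1))
           \<le> 1/4 + pair_obj eps S_opt / (real K * (real K - 1))"
proof -
  define S where "S = S_int"
  define T where "T = S_opt"
  define A where "A = S \<inter> T"
  define B where "B = S - T"
  define C where "C = T - S"
  have fS: "finite S" and fT: "finite T" using assms rev_finite_subset unfolding S_def T_def by blast+
  have fA: "finite A" and fB: "finite B" and fC: "finite C" using fS fT by (auto simp: A_def B_def C_def)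
  have SAB: "S = A \<union> B" and dAB: "A \<inter> B = {}" by (auto simp: A_def B_def)
  have TAC: "T = A \<union> C" and dAC: "A \<inter> C = {}" by (auto simp: A_def C_def)
  have dBC: "B \<inter> C = {}" by (auto simp: B_def C_def)
  have cS: "card S = K" and cT: "card T = K" using assms unfolding S_def T_def by auto
  have cSAB: "card S = card A + card B" using card_Int_Diff[OF fS, of T] unfolding A_def B_def by simp
  have cTAC: "card T = card A + card C" using card_Int_Diff[OF fT, of S] unfolding A_def C_def by (simp add: Int_commute)
  define m where "m = card B"
  have cC: "card C = m" using cSAB cTAC cS cT unfolding m_def by simp
  have mK: "m \<le> K" using cSAB cS unfolding m_def by simp
  let ?k = "gkernel eps"
  have WS: "WW eps S S = WW eps A A + 2 * WW eps A B + WW eps B B"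
    unfolding SAB using fA fB dAB by (simp add: WW_un1 WW_un2 WW_sym[of eps B A])
  have WT: "WW eps T T = WW eps A A + 2 * WW eps A C + WW eps C C"
    unfolding TAC using fA fC dAC by (simp add: WW_un1 WW_un2 WW_sym[of eps C A])
  define G2 where "G2 = 2 * WW eps A B + WW eps B B - 2 * WW eps A C - WW eps C C"
  have pdiff: "pair_obj eps S - pair_obj eps T = G2 / 2"
  proof -
    have "pair_obj eps S = (WW eps S S - K)/2" using pair_obj_WW[OF fS, of eps] cS by simp
    moreover have "pair_obj eps T = (WW eps T T - K)/2" using pair_obj_WW[OF fT, of eps] cT by simp
    ultimately show ?thesis unfolding G2_def WS WT by (simp add: field_simps)
  qed
  have P: "2 * WW eps B C \<le> WW eps B B + WW eps C C"
  proof -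
    define c where "c x = (if x \<in> B then (1::real) else -1)" for x
    have "0 \<le> (\<Sum>x\<in>B \<union> C. \<Sum>y\<in>B \<union> C. c x * c y * ?k x y)"
      using gk_psd[of "B \<union> C" eps c] fB fC assms(2) by simp
    also have "\<dots> = WW eps B B - WW eps B C - WW eps C B + WW eps C C"
    proof -
      have cB: "\<And>x. x \<in> B \<Longrightarrow> c x = 1" and cC': "\<And>x. x \<in> C \<Longrightarrow> c x = -1"
        using dBC by (auto simp: c_def)
      have "(\<Sum>x\<in>B \<union> C. \<Sum>y\<in>B \<union> C. c x * c y * ?k x y)
          = (\<Sum>x\<in>B. \<Sum>y\<in>B \<union> C. c x * c y * ?k x y) + (\<Sum>x\<in>C. \<Sum>y\<in>B \<union> C. c x * c y * ?k x y)"
        using fB fC dBC by (rule sum.union_disjoint)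
      also have "(\<Sum>x\<in>B. \<Sum>y\<in>B \<union> C. c x * c y * ?k x y) = WW eps B B - WW eps B C"
        unfolding WW_def using fB fC dBC
        by (simp add: sum.union_disjoint cB cC' sum_subtractf[symmetric] sum_negf)
      also have "(\<Sum>x\<in>C. \<Sum>y\<in>B \<union> C. c x * c y * ?k x y) = - WW eps C B + WW eps C C"
        unfolding WW_def using fB fC dBC
        by (simp add: sum.union_disjoint cB cC' sum_negf sum_subtractf)
      finally show ?thesis by simp
    qed
    finally show ?thesis using WW_sym[of eps C B] by simp
  qed
  have loc: "\<And>s t. s \<in> B \<Longrightarrow> t \<in> C \<Longrightarrow>
      (\<Sum>y\<in>S. ?k s y) - 1 \<le> (\<Sum>y\<in>S. ?k t y) - ?k t s"
  proof -
    fix s t assume s: "s \<in> B" and t: "t \<in> C"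
    have "t \<in> D - S" using t assms(5) unfolding C_def T_def by auto
    moreover have "s \<in> S" using s unfolding B_def by auto
    ultimately show "(\<Sum>y\<in>S. ?k s y) - 1 \<le> (\<Sum>y\<in>S. ?k t y) - ?k t s"
      using assms(10) local_ineq[OF fS] unfolding S_def by auto
  qed
  have L: "real m * WW eps B S - real m * real m \<le> real m * WW eps C S - WW eps C B"
  proof -
    have "(\<Sum>s\<in>B. \<Sum>t\<in>C. (\<Sum>y\<in>S. ?k s y) - 1) \<le> (\<Sum>s\<in>B. \<Sum>t\<in>C. (\<Sum>y\<in>S. ?k t y) - ?k t s)"
      by (intro sum_mono) (rule loc)
    moreover have "(\<Sum>s\<in>B. \<Sum>t\<in>C. (\<Sum>y\<in>S. ?k s y) - 1) = real m * WW eps B S - real m * real m"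
      unfolding WW_def using cC by (simp add: m_def sum_subtractf sum_distrib_left[symmetric] right_diff_distrib)
    moreover have "(\<Sum>s\<in>B. \<Sum>t\<in>C. (\<Sum>y\<in>S. ?k t y) - ?k t s) = real m * WW eps C S - WW eps C B"
      unfolding WW_def m_def by (simp add: sum_subtractf sum.swap[of _ B C])
    ultimately show ?thesis by simp
  qed
  have WBS: "WW eps B S = WW eps A B + WW eps B B"
    unfolding SAB using fA fB dAB by (simp add: WW_un2 WW_sym[of eps B A])
  have WCS: "WW eps C S = WW eps A C + WW eps C B"
    unfolding SAB using fA fB dAB by (simp add: WW_un2 WW_sym[of eps C A])
  have WBB: "WW eps B B \<ge> m" using WW_ge_card[OF fB] unfolding m_def .
  have WCC: "WW eps C C \<ge> m" using WW_ge_card[OF fC] cC by simp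
  have WCB: "WW eps C B = WW eps B C" by (rule WW_sym)
  have main: "real m * G2 \<le> 2 * real m * real m - WW eps B B - WW eps C C"
  proof -
    have m1: "real m * G2 = 2 * (real m * WW eps A B) + real m * WW eps B B - 2 * (real m * WW eps A C) - real m * WW eps C C"
      unfolding G2_def by (simp add: algebra_simps)
    have L': "real m * WW eps A B \<le> real m * WW eps A C + real m * WW eps B C - WW eps B C - real m * WW eps B B + real m * real m"
      using L unfolding WBS WCS WCB by (simp add: algebra_simps)
    show ?thesis
    proof (cases "m = 0")
      case True
      then have "B = {}" "C = {}" using fB fC cC unfolding m_def by auto
      then show ?thesis using True by (simp add: WW_def)
    next
      case False
      have "(real m - 1) * (2 * WW eps B C) \<le> (real m - 1) * (WW eps B B + WW eps C C)"
        using P False by (intro mult_left_mono) auto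
      then show ?thesis using m1 L' by (simp add: algebra_simps)
    qed
  qed
  have G2bound: "G2 \<le> real K * (real K - 1) / 2"
  proof (cases "m = 0")
    case True
    then have "B = {}" "C = {}" using fB fC cC unfolding m_def by auto
    then have "G2 = 0" unfolding G2_def by (simp add: WW_def)
    then show ?thesis using assms(3) by simp
  next
    case False
    then have mpos: "real m > 0" by simp
    have "real m * G2 \<le> real m * (2 * real m - 2)" using main WBB WCC by (simp add: algebra_simps)
    then have G2m: "G2 \<le> 2 * real m - 2" using mpos by (simp add: mult_le_cancel_left_pos)
    have Aempty: "m = K \<Longrightarrow> A = {}" using cSAB cS fA unfolding m_def by simp
    have G2A: "m = K \<Longrightarrow> G2 = WW eps B B - WW eps C C"
      using Aempty unfolding G2_def by (simp add: WW_def)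
    consider "K \<ge> 4" | "K = 3" | "K = 2" using assms(3) by linarith
    then show ?thesis
    proof cases
      case 1
      then have "real K \<ge> 4" by simp
      moreover have "real m \<le> real K" using mK by simp
      moreover have "0 \<le> (real K - 1) * (real K - 4)" using \<open>real K \<ge> 4\<close> by simp
      ultimately show ?thesis using G2m by (simp add: algebra_simps)
    next
      case 2
      show ?thesis
      proof (cases "m = 3")
        case True
        then show ?thesis using main G2A[unfolded 2] WCC True 2 by simp
      next
        case False
        then have "real m \<le> 2" using mK 2 by simp
        then show ?thesis using G2m 2 by simp
      qed
    next
      case 3
      show ?thesis
      proof (cases "m = 2")
        case False
        then have "real m \<le> 1" using mK 3 by simp
        then show ?thesis using G2m 3 by simp
      next
        case True
        then have AE: "A = {}" using Aempty 3 by simp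
        then have SB: "S = B" and TC: "T = C" using SAB TAC by auto
        have dST: "S \<inter> T = {}" using AE unfolding A_def .
        obtain b1 b2 where S2: "S = {b1, b2}" and b12: "b1 \<noteq> b2"
          using cS 3 card_2_iff by metis
        obtain c1 c2 where T2: "T = {c1, c2}" and c12: "c1 \<noteq> c2"
          using cT 3 card_2_iff by metis
        have cb: "c1 \<in> C" "c2 \<in> C" "b2 \<in> B" using S2 T2 SB TC by auto
        have nb: "c1 \<noteq> b1" "c1 \<noteq> b2" "c2 \<noteq> b1" "c2 \<noteq> b2" using dST S2 T2 by auto
        have l1: "?k b2 b1 \<le> ?k c1 b1"
          using loc[OF cb(3) cb(1)] b12 nb unfolding S2 by (simp add: gk_self gk_sym[of eps c1 b2])
        have l2: "?k b2 b1 \<le> ?k c2 b1"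
          using loc[OF cb(3) cb(2)] b12 nb unfolding S2 by (simp add: gk_self gk_sym[of eps c2 b2])
        define p where "p = ?k b1 b2"
        have p0: "0 \<le> p" using gk_pos[of eps b1 b2] unfolding p_def by simp
        have "p^4 = p^2 * p^2" by (simp add: power4_eq_xxxx power2_eq_square)
        also have "\<dots> \<le> (?k c1 b1)^2 * (?k b1 c2)^2"
          using l1 l2 p0 unfolding p_def
          by (intro mult_mono power_mono) (auto simp: gk_sym[of eps b2 b1] gk_sym[of eps b1 c2])
        also have "\<dots> \<le> ?k c1 c2" by (rule gk_tri)
        finally have "p^4 \<le> ?k c1 c2" .
        moreover have "pair_obj eps S = p" using b12 S2 pair2 unfolding p_def by simp
        moreover have "pair_obj eps T = ?k c1 c2" using c12 T2 pair2 by simp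
        ultimately have "pair_obj eps S - pair_obj eps T \<le> 1/2" using quart[of p] by simp
        then show ?thesis using pdiff 3 by simp
      qed
    qed
  qed
  have D: "real K * (real K - 1) > 0" using assms(3) by simp
  have "pair_obj eps S \<le> real K * (real K - 1) / 4 + pair_obj eps T"
    using pdiff G2bound by simp
  then have "pair_obj eps S / (real K * (real K - 1)) \<le> (real K * (real K - 1) / 4 + pair_obj eps T) / (real K * (real K - 1))"
    using D by (intro divide_right_mono) auto
  also have "\<dots> = 1/4 + pair_obj eps T / (real K * (real K - 1))"
    using D assms(3) by (simp add: add_divide_distrib)
  finally show ?thesis unfolding S_def T_def .
qed

end
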